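(* Let $(F_S,\iota)$ be an embedded local étale algebra, $\Gamma\subseteq\mathrm{PGL}_2(F_S)$ a plectic subgroup and $g\in\mathrm{PGL}_2(F_S)$. Then $g\Gamma g^{-1}$ is plectic with set of distinguished limit points $\mathcal L_{g\Gamma g^{-1},S}=g(\mathcal L_{\Gamma,S})$.
   Context: Fix a prime $p$ and let $\mathbf{C}$ be the completion of an algebraic closure of $\mathbb{Q}_p$ or of $\mathbb{F}_p((T))$. An embedded local étale algebra $(F_S,\iota)$ consists of a finite non-empty set $S$, non-Archimedean local fields $F_\mathfrak p$ ($\mathfrak p\in S$) of residue characteristic $p$ and the same characteristic as $\mathbf C$, and embeddings $\iota_\mathfrak p\colon F_\mathfrak p\hookrightarrow\mathbf C$ (so $\mathbb P^1(F_\mathfrak p)\subseteq\mathbb P^1(\mathbf C)$). $\mathrm{PGL}_2(F_S)=\prod_\mathfrak p\mathrm{PGL}_2(F_\mathfrak p)$ acts componentwise by Möbius transformations on $\prod_{\mathfrak p\in S}\mathbb P^1(\mathbf C)$. The limit set $\mathcal L^S_\Gamma$ of a subgroup $\Gamma$ is the set of $x$ with $\gamma_j(y)\to x$ for some $y$ and pairwise distinct $\gamma_j\in\Gamma$. $\Gamma$ is plectic if there are subsets $\mathcal L_{\Gamma,\mathfrak p}\subseteq\mathbb P^1(F_\mathfrak p)$ with $\mathcal L^S_\Gamma=\bigcup_\mathfrak p\big(\mathcal L_{\Gamma,\mathfrak p}\times\prod_{\mathfrak q\ne\mathfrak p}\mathbb P^1(\mathbf C)\big)$; its set of distinguished limit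 points is $\mathcal L_{\Gamma,S}=\prod_\mathfrak p\mathcal L_{\Gamma,\mathfrak p}$. *)

theory Defs
  imports Complex_Main "HOL-Computational_Algebra.Polynomial" "HOL-Library.FuncSet"
begin

text \<open>The field C is modelled by a type 'c of class field together with an
absolute value v.\<close>

definition nonarch_abs :: "('c::field \<Rightarrow> real) \<Rightarrow> bool" where
  "nonarch_abs v \<longleftrightarrow> v 0 = 0 \<and> (\<forall>x. x \<noteq> 0 \<longrightarrow> v x > 0) \<and>
     (\<forall>x y. v (x * y) = v x * v y) \<and> (\<forall>x y. v (x + y) \<le> max (v x) (v y))"

definition v_complete :: "('c::field \<Rightarrow> real) \<Rightarrow> bool" where
  "v_complete v \<longleftrightarrow> (\<forall>X::nat \<Rightarrow> 'c.
     (\<forall>e>0. \<exists>N. \<forall>m\<ge>N. \<forall>n\<ge>N. v (X m - X n) < e) \<longrightarrow>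
     (\<exists>l. (\<lambda>n. v (X n - l)) \<longlonglongrightarrow> 0))"

definition alg_closed_field :: "'c::field itself \<Rightarrow> bool" where
  "alg_closed_field _ \<longleftrightarrow> (\<forall>q::'c poly. degree q > 0 \<longrightarrow> (\<exists>x. poly q x = 0))"

definition ambient_C :: "nat \<Rightarrow> ('c::field \<Rightarrow> real) \<Rightarrow> bool" where
  "ambient_C p v \<longleftrightarrow> prime p \<and> nonarch_abs v \<and> (\<exists>x. v x \<noteq> 0 \<and> v x \<noteq> 1) \<and>
     v_complete v \<and> alg_closed_field TYPE('c) \<and> v (of_nat p) < 1"

section \<open>Non-Archimedean local fields embedded in C (given as images of the embeddings)\<close>

definition local_subfield :: "('c::field \<Rightarrow> real) \<Rightarrow> 'c set \<Rightarrow> bool" where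
  "local_subfield v K \<longleftrightarrow>
     \<comment> \<open>subfield\<close>
     0 \<in> K \<and> 1 \<in> K \<and> (\<forall>x\<in>K. \<forall>y\<in>K. x + y \<in> K \<and> x * y \<in> K) \<and>
     (\<forall>x\<in>K. - x \<in> K) \<and> (\<forall>x\<in>K. x \<noteq> 0 \<longrightarrow> inverse x \<in> K) \<and>
     \<comment> \<open>complete (closed in C)\<close>
     (\<forall>X l. (\<forall>n. X n \<in> K) \<longrightarrow> (\<lambda>n. v (X n - l)) \<longlonglongrightarrow> 0 \<longrightarrow> l \<in> K) \<and>
     \<comment> \<open>discretely valued, non-trivially\<close>
     (\<exists>\<pi>\<in>K. 0 < v \<pi> \<and> v \<pi> < 1 \<and> (\<forall>x\<in>K. x \<noteq> 0 \<longrightarrow> (\<exists>n::int. v x = v \<pi> powi n))) \<and>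
     \<comment> \<open>finite residue field\<close>
     (\<exists>R. finite R \<and> R \<subseteq> {x\<in>K. v x \<le> 1} \<and>
        (\<forall>x\<in>K. v x \<le> 1 \<longrightarrow> (\<exists>r\<in>R. v (x - r) < 1)))"

type_synonym 'c vec2 = "'c \<times> 'c"
type_synonym 'c pt = "'c vec2 set"          \<comment> \<open>a point of P^1(C): a line minus 0\<close>
type_synonym 'c m22 = "'c \<times> 'c \<times> 'c \<times> 'c"  \<comment> \<open>(a,b,c,d) = [[a,b],[c,d]]\<close>
type_synonym 'c pgl = "'c m22 set"          \<comment> \<open>an element of PGL_2(C): C^x-class of a matrix\<close>

definition proj_line :: "'c::field vec2 \<Rightarrow> 'c pt" where
  "proj_line u = {(k * fst u, k * snd u) | k. k \<noteq> 0}"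

text \<open>P^1(K) as a subset of P^1(C); P1 UNIV is P^1(C).\<close>
definition P1 :: "'c::field set \<Rightarrow> 'c pt set" where
  "P1 K = {proj_line (x, y) | x y. x \<in> K \<and> y \<in> K \<and> (x, y) \<noteq> (0, 0)}"

fun mdet :: "'c::field m22 \<Rightarrow> 'c" where
  "mdet (a, b, c, d) = a * d - b * c"

fun mmul :: "'c::field m22 \<Rightarrow> 'c m22 \<Rightarrow> 'c m22" where
  "mmul (a, b, c, d) (a', b', c', d') =
     (a * a' + b * c', a * b' + b * d', c * a' + d * c', c * b' + d * d')"

fun mapp :: "'c::field m22 \<Rightarrow> 'c vec2 \<Rightarrow> 'c vec2" where
  "mapp (a, b, c, d) (x, y) = (a * x + b * y, c * x + d * y)"

fun madj :: "'c::field m22 \<Rightarrow> 'c m22" where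
  "madj (a, b, c, d) = (d, - b, - c, a)"

fun msmult :: "'c::field \<Rightarrow> 'c m22 \<Rightarrow> 'c m22" where
  "msmult k (a, b, c, d) = (k * a, k * b, k * c, k * d)"

definition pgl_class :: "'c::field m22 \<Rightarrow> 'c pgl" where
  "pgl_class M = {msmult k M | k. k \<noteq> 0}"

fun mentries :: "'c m22 \<Rightarrow> 'c set" where
  "mentries (a, b, c, d) = {a, b, c, d}"

definition PGL2 :: "'c::field set \<Rightarrow> 'c pgl set" where
  "PGL2 K = {pgl_class M | M. mentries M \<subseteq> K \<and> mdet M \<noteq> 0}"

definition pgl_mult :: "'c::field pgl \<Rightarrow> 'c pgl \<Rightarrow> 'c pgl" where
  "pgl_mult X Y = {mmul A B | A B. A \<in> X \<and> B \<in> Y}"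

definition pgl_inv :: "'c::field pgl \<Rightarrow> 'c pgl" where
  "pgl_inv X = madj ` X"

definition pgl_one :: "'c::field pgl" where
  "pgl_one = pgl_class (1, 0, 0, 1)"

definition mob :: "'c::field pgl \<Rightarrow> 'c pt \<Rightarrow> 'c pt" where
  "mob X z = {mapp A u | A u. A \<in> X \<and> u \<in> z}"

definition chordal :: "('c::field \<Rightarrow> real) \<Rightarrow> 'c vec2 \<Rightarrow> 'c vec2 \<Rightarrow> real" where
  "chordal v u w = v (fst u * snd w - snd u * fst w) /
      (max (v (fst u)) (v (snd u)) * max (v (fst w)) (v (snd w)))"

definition pt_rep :: "'c pt \<Rightarrow> 'c vec2" where
  "pt_rep z = (SOME u. u \<in> z)"

definition p1_tendsto :: "('c::field \<Rightarrow> real) \<Rightarrow> (nat \<Rightarrow> 'c pt) \<Rightarrow> 'c pt \<Rightarrow> bool" where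
  "p1_tendsto v X x \<longleftrightarrow> (\<lambda>j. chordal v (pt_rep (X j)) (pt_rep x)) \<longlonglongrightarrow> 0"

text \<open>An embedded local etale algebra: a finite non-empty index set S and for each
p in S the image F p of the embedding of the local field F_p into C.\<close>
definition emb_local_etale :: "('c::field \<Rightarrow> real) \<Rightarrow> 'i set \<Rightarrow> ('i \<Rightarrow> 'c set) \<Rightarrow> bool" where
  "emb_local_etale v S F \<longleftrightarrow> finite S \<and> S \<noteq> {} \<and> (\<forall>q\<in>S. local_subfield v (F q))"

definition PS :: "'i set \<Rightarrow> ('i \<Rightarrow> 'c::field pt) set" where
  "PS S = PiE S (\<lambda>_. P1 UNIV)"

definition PGL2_S :: "'i set \<Rightarrow> ('i \<Rightarrow> 'c::field set) \<Rightarrow> ('i \<Rightarrow> 'c pgl) set" where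
  "PGL2_S S F = PiE S (\<lambda>q. PGL2 (F q))"

definition mult_S :: "'i set \<Rightarrow> ('i \<Rightarrow> 'c::field pgl) \<Rightarrow> ('i \<Rightarrow> 'c pgl) \<Rightarrow> ('i \<Rightarrow> 'c pgl)" where
  "mult_S S g h = restrict (\<lambda>q. pgl_mult (g q) (h q)) S"

definition inv_S :: "'i set \<Rightarrow> ('i \<Rightarrow> 'c::field pgl) \<Rightarrow> ('i \<Rightarrow> 'c pgl)" where
  "inv_S S g = restrict (\<lambda>q. pgl_inv (g q)) S"

definition one_S :: "'i set \<Rightarrow> ('i \<Rightarrow> 'c::field pgl)" where
  "one_S S = restrict (\<lambda>q. pgl_one) S"

definition act_S :: "'i set \<Rightarrow> ('i \<Rightarrow> 'c::field pgl) \<Rightarrow> ('i \<Rightarrow> 'c pt) \<Rightarrow> ('i \<Rightarrow> 'c pt)" where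
  "act_S S g x = restrict (\<lambda>q. mob (g q) (x q)) S"

definition subgroup_S :: "'i set \<Rightarrow> ('i \<Rightarrow> 'c::field set) \<Rightarrow> ('i \<Rightarrow> 'c pgl) set \<Rightarrow> bool" where
  "subgroup_S S F \<Gamma> \<longleftrightarrow> \<Gamma> \<subseteq> PGL2_S S F \<and> one_S S \<in> \<Gamma> \<and>
     (\<forall>g\<in>\<Gamma>. \<forall>h\<in>\<Gamma>. mult_S S g h \<in> \<Gamma>) \<and> (\<forall>g\<in>\<Gamma>. inv_S S g \<in> \<Gamma>)"

definition conj_S :: "'i set \<Rightarrow> ('i \<Rightarrow> 'c::field pgl) \<Rightarrow> ('i \<Rightarrow> 'c pgl) set \<Rightarrow> ('i \<Rightarrow> 'c pgl) set" where
  "conj_S S g \<Gamma> = (\<lambda>\<gamma>. mult_S S (mult_S S g \<gamma>) (inv_S S g)) ` \<Gamma>"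

text \<open>Limit set: x such that gamma_j(y) tends to x (componentwise, i.e. in the product
topology) for some y and pairwise distinct gamma_j in Gamma.\<close>
definition limit_set :: "('c::field \<Rightarrow> real) \<Rightarrow> 'i set \<Rightarrow> ('i \<Rightarrow> 'c pgl) set \<Rightarrow> ('i \<Rightarrow> 'c pt) set" where
  "limit_set v S \<Gamma> = {x \<in> PS S. \<exists>y \<in> PS S. \<exists>\<gamma>::nat \<Rightarrow> ('i \<Rightarrow> 'c pgl).
      (\<forall>j. \<gamma> j \<in> \<Gamma>) \<and> inj \<gamma> \<and> (\<forall>q\<in>S. p1_tendsto v (\<lambda>j. act_S S (\<gamma> j) y q) (x q))}"

definition plectic_family :: "('c::field \<Rightarrow> real) \<Rightarrow> 'i set \<Rightarrow> ('i \<Rightarrow> 'c set) \<Rightarrow>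
    ('i \<Rightarrow> 'c pgl) set \<Rightarrow> ('i \<Rightarrow> 'c pt set) \<Rightarrow> bool" where
  "plectic_family v S F \<Gamma> L \<longleftrightarrow> (\<forall>q\<in>S. L q \<subseteq> P1 (F q)) \<and> (\<forall>q. q \<notin> S \<longrightarrow> L q = {}) \<and>
     limit_set v S \<Gamma> = (\<Union>q\<in>S. {x \<in> PS S. x q \<in> L q})"

definition plectic :: "('c::field \<Rightarrow> real) \<Rightarrow> 'i set \<Rightarrow> ('i \<Rightarrow> 'c set) \<Rightarrow>
    ('i \<Rightarrow> 'c pgl) set \<Rightarrow> bool" where
  "plectic v S F \<Gamma> \<longleftrightarrow> (\<exists>L. plectic_family v S F \<Gamma> L)"

text \<open>The set of distinguished limit points prod_p L_{Gamma,p} (the family L is unique).\<close>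
definition dist_limit_points :: "('c::field \<Rightarrow> real) \<Rightarrow> 'i set \<Rightarrow> ('i \<Rightarrow> 'c set) \<Rightarrow>
    ('i \<Rightarrow> 'c pgl) set \<Rightarrow> ('i \<Rightarrow> 'c pt) set" where
  "dist_limit_points v S F \<Gamma> = PiE S (THE L. plectic_family v S F \<Gamma> L)"

end

theory Submission
  imports Defs
begin

lemma pl_mem: "w \<in> proj_line u \<longleftrightarrow> (\<exists>k. k \<noteq> 0 \<and> w = (k * fst u, k * snd u))"
  unfolding proj_line_def by auto

lemma pl_self: "u \<noteq> (0,0) \<Longrightarrow> u \<in> proj_line u"
  unfolding pl_mem by (rule exI[of _ 1]) auto

lemma pl_nz: "w \<in> proj_line u \<Longrightarrow> u \<noteq> (0,0) \<Longrightarrow> w \<noteq> (0,0)"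
  unfolding pl_mem by (cases u) auto

lemma pl_same: assumes "a \<in> proj_line r" "b \<in> proj_line r"
  shows "\<exists>k. k \<noteq> 0 \<and> a = (k * fst b, k * snd b)"
proof -
  obtain k1 where k1: "k1 \<noteq> 0" "a = (k1 * fst r, k1 * snd r)" using assms(1) pl_mem by blast
  obtain k2 where k2: "k2 \<noteq> 0" "b = (k2 * fst r, k2 * snd r)" using assms(2) pl_mem by blast
  show ?thesis using k1 k2 by (intro exI[of _ "k1 / k2"]) auto
qed

lemma pl_eq: assumes "w \<in> proj_line u" shows "proj_line w = proj_line u"
proof -
  obtain k where k: "k \<noteq> 0" "w = (k * fst u, k * snd u)" using assms pl_mem by blast
  show ?thesis
  proof (rule set_eqI)
    fix z
    show "z \<in> proj_line w \<longleftrightarrow> z \<in> proj_line u"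
    proof
      assume "z \<in> proj_line w"
      then obtain k' where "k' \<noteq> 0" "z = (k' * fst w, k' * snd w)" unfolding pl_mem by blast
      then show "z \<in> proj_line u" unfolding pl_mem k(2)
        by (intro exI[of _ "k' * k"]) (simp add: k(1) mult.assoc)
    next
      assume "z \<in> proj_line u"
      then obtain k' where "k' \<noteq> 0" "z = (k' * fst u, k' * snd u)" unfolding pl_mem by blast
      then show "z \<in> proj_line w" unfolding pl_mem k(2)
        by (intro exI[of _ "k' / k"]) (simp add: k(1))
    qed
  qed
qed

lemma P1_UNIV_rep: assumes "z \<in> P1 UNIV"
  shows "pt_rep z \<in> z" "pt_rep z \<noteq> (0,0)" "z = proj_line (pt_rep z)"
proof -
  obtain x y where z: "z = proj_line (x,y)" "(x,y) \<noteq> (0,0)" using assms unfolding P1_def by auto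
  have "(x,y) \<in> z" using z pl_self by metis
  then show 1: "pt_rep z \<in> z" unfolding pt_rep_def by (rule someI)
  then show "pt_rep z \<noteq> (0,0)" using z pl_nz by metis
  show "z = proj_line (pt_rep z)" using 1 z pl_eq by metis
qed

lemma P1_UNIV_I: "u \<noteq> (0,0) \<Longrightarrow> proj_line u \<in> P1 UNIV"
  unfolding P1_def by (cases u) auto

lemma P1_K_I: "u \<noteq> (0,0) \<Longrightarrow> fst u \<in> K \<Longrightarrow> snd u \<in> K \<Longrightarrow> proj_line u \<in> P1 K"
  unfolding P1_def by (cases u) auto

lemma mapp_mmul: "mapp (mmul A B) u = mapp A (mapp B u)"
  by (cases A; cases B; cases u) (simp add: algebra_simps)

lemma mapp_madj: "mapp (madj A) (mapp A u) = (mdet A * fst u, mdet A * snd u)"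
  by (cases A; cases u) (simp add: algebra_simps)

lemma madj_mapp: "mapp A (mapp (madj A) u) = (mdet A * fst u, mdet A * snd u)"
  by (cases A; cases u) (simp add: algebra_simps)

lemma mapp_scale: "mapp A (k * fst u, k * snd u) = (k * fst (mapp A u), k * snd (mapp A u))"
  by (cases A; cases u) (simp add: algebra_simps)

lemma mapp_msmult: "mapp (msmult k A) u = (k * fst (mapp A u), k * snd (mapp A u))"
  by (cases A; cases u) (simp add: algebra_simps)

lemma mapp_nz: assumes "mdet A \<noteq> 0" "u \<noteq> (0,0)" shows "mapp A u \<noteq> (0,0)"
proof
  assume "mapp A u = (0,0)"
  then have "mapp (madj A) (mapp A u) = (0,0)" by (cases A) simp
  then show False using assms mapp_madj[of A u] by (cases u) auto
qed

lemma mob_class: assumes "mdet M \<noteq> 0" "u \<noteq> (0,0)"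
  shows "mob (pgl_class M) (proj_line u) = proj_line (mapp M u)"
proof (rule set_eqI)
  fix w
  show "w \<in> mob (pgl_class M) (proj_line u) \<longleftrightarrow> w \<in> proj_line (mapp M u)"
  proof
    assume "w \<in> mob (pgl_class M) (proj_line u)"
    then obtain A u' where "A \<in> pgl_class M" "u' \<in> proj_line u" "w = mapp A u'"
      unfolding mob_def by auto
    then obtain k k' where "k \<noteq> 0" "k' \<noteq> 0" "A = msmult k M" "u' = (k' * fst u, k' * snd u)"
      unfolding pgl_class_def pl_mem by auto
    then show "w \<in> proj_line (mapp M u)" unfolding pl_mem \<open>w = _\<close>
      by (intro exI[of _ "k*k'"]) (simp add: mapp_msmult mapp_scale)
  next
    assume "w \<in> proj_line (mapp M u)"
    then obtain k where k: "k \<noteq> 0" "w = (k * fst (mapp M u), k * snd (mapp M u))" unfolding pl_mem by auto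
    have h1: "M \<in> pgl_class M" unfolding pgl_class_def
      by (rule CollectI, rule exI[of _ 1]) (cases M, simp)
    have h2: "(k * fst u, k * snd u) \<in> proj_line u" using k unfolding pl_mem by auto
    have h3: "w = mapp M (k * fst u, k * snd u)" by (simp only: mapp_scale k(2))
    show "w \<in> mob (pgl_class M) (proj_line u)"
      unfolding mob_def
      by (rule CollectI, rule exI[of _ M], rule exI[of _ "(k * fst u, k * snd u)"]) (intro conjI h1 h2 h3)
  qed
qed

lemma pgl_class_mem: "B \<in> pgl_class A \<longleftrightarrow> (\<exists>k. k \<noteq> 0 \<and> B = msmult k A)"
  unfolding pgl_class_def by auto

lemma msmult_1: "msmult 1 A = A" by (cases A) simp

lemma mmul_smult: "mmul (msmult k A) (msmult k' B) = msmult (k*k') (mmul A B)"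
  by (cases A; cases B) (simp add: algebra_simps)

lemma madj_smult: "madj (msmult k A) = msmult k (madj A)"
  by (cases A) simp

lemma madj_madj: "madj (madj A) = A" by (cases A) simp

lemma mdet_mmul: "mdet (mmul A B) = mdet A * mdet B"
  by (cases A; cases B) (simp add: algebra_simps)

lemma mdet_madj: "mdet (madj A) = mdet A"
  by (cases A) (simp add: algebra_simps)

lemma pgl_mult_class: "pgl_mult (pgl_class A) (pgl_class B) = pgl_class (mmul A B)"
proof (rule set_eqI)
  fix C
  show "C \<in> pgl_mult (pgl_class A) (pgl_class B) \<longleftrightarrow> C \<in> pgl_class (mmul A B)"
  proof
    assume "C \<in> pgl_mult (pgl_class A) (pgl_class B)"
    then obtain A' B' where "A' \<in> pgl_class A" "B' \<in> pgl_class B" "C = mmul A' B'"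
      unfolding pgl_mult_def by blast
    then obtain k k' where "k \<noteq> 0" "k' \<noteq> 0" "C = mmul (msmult k A) (msmult k' B)"
      unfolding pgl_class_mem by blast
    then show "C \<in> pgl_class (mmul A B)" unfolding pgl_class_mem mmul_smult
      by (intro exI[of _ "k*k'"]) simp
  next
    assume "C \<in> pgl_class (mmul A B)"
    then obtain k where k: "k \<noteq> 0" "C = msmult k (mmul A B)" unfolding pgl_class_mem by blast
    have "C = mmul (msmult k A) (msmult 1 B)" using k by (simp add: mmul_smult)
    moreover have "msmult k A \<in> pgl_class A" using k unfolding pgl_class_mem by auto
    moreover have "msmult 1 B \<in> pgl_class B" unfolding pgl_class_mem by (rule exI[of _ 1]) simp
    ultimately show "C \<in> pgl_mult (pgl_class A) (pgl_class B)"
      unfolding pgl_mult_def by blast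
  qed
qed

lemma pgl_inv_class: "pgl_inv (pgl_class A) = pgl_class (madj A)"
proof (rule set_eqI)
  fix C
  show "C \<in> pgl_inv (pgl_class A) \<longleftrightarrow> C \<in> pgl_class (madj A)"
  proof
    assume "C \<in> pgl_inv (pgl_class A)"
    then obtain A' where "A' \<in> pgl_class A" "C = madj A'" unfolding pgl_inv_def by blast
    then show "C \<in> pgl_class (madj A)" unfolding pgl_class_mem by (auto simp: madj_smult)
  next
    assume "C \<in> pgl_class (madj A)"
    then obtain k where k: "k \<noteq> 0" "C = msmult k (madj A)" unfolding pgl_class_mem by blast
    have "C = madj (msmult k A)" using k by (simp add: madj_smult)
    moreover have "msmult k A \<in> pgl_class A" using k unfolding pgl_class_mem by auto
    ultimately show "C \<in> pgl_inv (pgl_class A)" unfolding pgl_inv_def by blast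
  qed
qed

lemma msmult_msmult: "msmult a (msmult b A) = msmult (a*b) A"
  by (cases A) (simp add: mult.assoc)

lemma pgl_class_smult: assumes "k \<noteq> 0" shows "pgl_class (msmult k A) = pgl_class A"
proof (rule set_eqI)
  fix B
  show "B \<in> pgl_class (msmult k A) \<longleftrightarrow> B \<in> pgl_class A"
    unfolding pgl_class_mem
  proof
    assume "\<exists>k'. k' \<noteq> 0 \<and> B = msmult k' (msmult k A)"
    then obtain k' where "k' \<noteq> 0" "B = msmult k' (msmult k A)" by blast
    then show "\<exists>k. k \<noteq> 0 \<and> B = msmult k A"
      by (intro exI[of _ "k' * k"]) (simp add: assms msmult_msmult)
  next
    assume "\<exists>k'. k' \<noteq> 0 \<and> B = msmult k' A"
    then obtain k' where "k' \<noteq> 0" "B = msmult k' A" by blast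
    then show "\<exists>k'. k' \<noteq> 0 \<and> B = msmult k' (msmult k A)"
      by (intro exI[of _ "k' / k"]) (simp add: assms msmult_msmult)
  qed
qed

lemma pgl_inv_inv: "pgl_inv (pgl_inv X) = X"
  unfolding pgl_inv_def by (simp add: image_image madj_madj)

lemma PGL2_E: assumes "X \<in> PGL2 K" obtains M where "X = pgl_class M" "mentries M \<subseteq> K" "mdet M \<noteq> 0"
  using assms unfolding PGL2_def by auto

lemma PGL2_UNIV_I: "mdet M \<noteq> 0 \<Longrightarrow> pgl_class M \<in> PGL2 UNIV"
  unfolding PGL2_def by (rule CollectI, rule exI[of _ M]) simp

lemma PGL2_mono: "X \<in> PGL2 K \<Longrightarrow> X \<in> PGL2 UNIV"
  unfolding PGL2_def by auto

lemma pgl_mult_PGL2: "X \<in> PGL2 UNIV \<Longrightarrow> Y \<in> PGL2 UNIV \<Longrightarrow> pgl_mult X Y \<in> PGL2 UNIV"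
proof -
  assume "X \<in> PGL2 UNIV" "Y \<in> PGL2 UNIV"
  then obtain M N where "X = pgl_class M" "mdet M \<noteq> 0" "Y = pgl_class N" "mdet N \<noteq> 0"
    by (metis PGL2_E)
  then show ?thesis by (simp only: pgl_mult_class) (rule PGL2_UNIV_I, simp add: mdet_mmul)
qed

lemma pgl_inv_PGL2: "X \<in> PGL2 UNIV \<Longrightarrow> pgl_inv X \<in> PGL2 UNIV"
proof -
  assume "X \<in> PGL2 UNIV"
  then obtain M where "X = pgl_class M" "mdet M \<noteq> 0" by (metis PGL2_E)
  then show ?thesis by (simp only: pgl_inv_class) (rule PGL2_UNIV_I, simp add: mdet_madj)
qed

lemma mob_P1: assumes "X \<in> PGL2 UNIV" "z \<in> P1 UNIV" shows "mob X z \<in> P1 UNIV"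
proof -
  obtain M where M: "X = pgl_class M" "mdet M \<noteq> 0" using assms(1) by (auto elim: PGL2_E)
  show ?thesis using P1_UNIV_rep[OF assms(2)] M mob_class mapp_nz P1_UNIV_I by metis
qed

lemma mob_mult: assumes "X \<in> PGL2 UNIV" "Y \<in> PGL2 UNIV" "z \<in> P1 UNIV"
  shows "mob (pgl_mult X Y) z = mob X (mob Y z)"
proof -
  obtain M where M: "X = pgl_class M" "mdet M \<noteq> 0" using assms(1) by (auto elim: PGL2_E)
  obtain N where N: "Y = pgl_class N" "mdet N \<noteq> 0" using assms(2) by (auto elim: PGL2_E)
  obtain u where u: "z = proj_line u" "u \<noteq> (0,0)" using P1_UNIV_rep[OF assms(3)] by metis
  have d: "mdet (mmul M N) \<noteq> 0" using M N by (simp add: mdet_mmul)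
  show ?thesis using M N u d
    by (simp add: pgl_mult_class mob_class mapp_nz mapp_mmul)
qed

lemma mob_inv: assumes "X \<in> PGL2 UNIV" "z \<in> P1 UNIV"
  shows "mob (pgl_inv X) (mob X z) = z"
proof -
  obtain M where M: "X = pgl_class M" "mdet M \<noteq> 0" using assms(1) by (auto elim: PGL2_E)
  obtain u where u: "z = proj_line u" "u \<noteq> (0,0)" using P1_UNIV_rep[OF assms(2)] by metis
  have "mob (pgl_inv X) (mob X z) = proj_line (mdet M * fst u, mdet M * snd u)"
    using M u by (simp add: pgl_inv_class mob_class mapp_nz mdet_madj mapp_madj)
  also have "\<dots> = z" using u M by (metis pl_eq pl_mem)
  finally show ?thesis .
qed

lemma mob_inv2: assumes "X \<in> PGL2 UNIV" "z \<in> P1 UNIV"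
  shows "mob X (mob (pgl_inv X) z) = z"
  using mob_inv[OF pgl_inv_PGL2[OF assms(1)] assms(2)] by (simp add: pgl_inv_inv)

lemma mob_P1K: assumes "X \<in> PGL2 K" "z \<in> P1 K"
  and cl: "\<forall>x\<in>K. \<forall>y\<in>K. x + y \<in> K \<and> x * y \<in> K"
  shows "mob X z \<in> P1 K"
proof -
  obtain M where M: "X = pgl_class M" "mentries M \<subseteq> K" "mdet M \<noteq> 0" using assms(1) by (auto elim: PGL2_E)
  obtain x y where u: "z = proj_line (x,y)" "x \<in> K" "y \<in> K" "(x,y) \<noteq> (0,0)"
    using assms(2) unfolding P1_def by auto
  obtain a b c d where abcd: "M = (a,b,c,d)" by (cases M)
  have "fst (mapp M (x,y)) \<in> K" "snd (mapp M (x,y)) \<in> K"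
    using M(2) u cl abcd by auto
  then show ?thesis using M u by (simp add: mob_class mapp_nz P1_K_I)
qed

lemma cancel: assumes "X \<in> PGL2 UNIV" "Y \<in> PGL2 UNIV"
  shows "pgl_mult (pgl_mult (pgl_inv X) (pgl_mult (pgl_mult X Y) (pgl_inv X))) (pgl_inv (pgl_inv X)) = Y"
proof -
  obtain M where M: "X = pgl_class M" "mdet M \<noteq> 0" using assms(1) by (auto elim: PGL2_E)
  obtain N where N: "Y = pgl_class N" using assms(2) by (auto elim: PGL2_E)
  have e: "mmul (mmul (madj M) (mmul (mmul M N) (madj M))) M = msmult (mdet M * mdet M) N"
    by (cases M; cases N) (simp add: algebra_simps)
  show ?thesis using M N
    by (simp add: pgl_inv_inv pgl_inv_class pgl_mult_class e pgl_class_smult madj_madj)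
qed

definition NN :: "('c::field \<Rightarrow> real) \<Rightarrow> 'c vec2 \<Rightarrow> real" where
  "NN v u = max (v (fst u)) (v (snd u))"

fun mm :: "('c::field \<Rightarrow> real) \<Rightarrow> 'c m22 \<Rightarrow> real" where
  "mm v (a,b,c,d) = max (max (v a) (v b)) (max (v c) (v d))"

context
  fixes v :: "'c::field \<Rightarrow> real"
  assumes na: "nonarch_abs v"
begin

lemma v0: "v 0 = 0" using na unfolding nonarch_abs_def by auto
lemma vmult: "v (x*y) = v x * v y" using na unfolding nonarch_abs_def by auto
lemma vadd: "v (x + y) \<le> max (v x) (v y)" using na unfolding nonarch_abs_def by auto
lemma vpos: "x \<noteq> 0 \<Longrightarrow> v x > 0" using na unfolding nonarch_abs_def by auto
lemma vnn: "v x \<ge> 0" using v0 vpos by (cases "x = 0") (auto intro: less_imp_le)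
lemma v1: "v 1 = 1"
proof -
  have "v 1 = v 1 * v 1" using vmult[of 1 1] by simp
  moreover have "v 1 > 0" using vpos by simp
  ultimately show ?thesis by simp
qed
lemma vneg: "v (- x) = v x"
proof -
  have "v (-1) * v (-1) = 1" using vmult[of "-1" "-1"] v1 by simp
  moreover have "v (-1) \<ge> 0" by (rule vnn)
  ultimately have "v (-1) = 1"
  proof -
    assume h: "v (-1) * v (-1) = 1" "v (-1) \<ge> 0"
    have "(v (-1) - 1) * (v (-1) + 1) = 0" using h(1) by (simp add: algebra_simps)
    moreover have "v (-1) + 1 \<noteq> 0" using h(2) by linarith
    ultimately show ?thesis by simp
  qed
  then show ?thesis using vmult[of "-1" x] by simp
qed
lemma vlin: "v (a*x + b*y) \<le> max (v a) (v b) * max (v x) (v y)"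
proof -
  have "v (a*x + b*y) \<le> max (v a * v x) (v b * v y)" using vadd vmult by metis
  also have "\<dots> \<le> max (v a) (v b) * max (v x) (v y)"
  proof -
    have "v a * v x \<le> max (v a) (v b) * max (v x) (v y)"
      using vnn[of a] vnn[of x] by (intro mult_mono) auto
    moreover have "v b * v y \<le> max (v a) (v b) * max (v x) (v y)"
      using vnn[of b] vnn[of y] by (intro mult_mono) auto
    ultimately show ?thesis by simp
  qed
  finally show ?thesis .
qed

lemma NN_nn: "NN v u \<ge> 0" unfolding NN_def using vnn by (simp add: le_max_iff_disj)
lemma NN_pos: "u \<noteq> (0,0) \<Longrightarrow> NN v u > 0"
  unfolding NN_def using vpos by (cases u) (auto simp: less_max_iff_disj)
lemma NN_scale: "NN v (k * fst u, k * snd u) = v k * NN v u"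
  unfolding NN_def using vnn[of k] by (simp add: vmult max_mult_distrib_left)

lemma mapp_upper: "NN v (mapp A u) \<le> mm v A * NN v u"
proof -
  obtain a b c d where A: "A = (a,b,c,d)" by (cases A)
  obtain x y where u: "u = (x,y)" by (cases u)
  have n: "max (v x) (v y) \<ge> 0" using NN_nn[of u] u unfolding NN_def by simp
  have 1: "v (a*x+b*y) \<le> mm v A * NN v u"
  proof -
    have "max (v a) (v b) * max (v x) (v y) \<le> mm v A * max (v x) (v y)"
      using n A by (intro mult_right_mono) auto
    then show ?thesis using vlin[of a x b y] u unfolding NN_def by simp
  qed
  have 2: "v (c*x+d*y) \<le> mm v A * NN v u"
  proof -
    have "max (v c) (v d) * max (v x) (v y) \<le> mm v A * max (v x) (v y)"
      using n A by (intro mult_right_mono) auto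
    then show ?thesis using vlin[of c x d y] u unfolding NN_def by simp
  qed
  show ?thesis using 1 2 A u unfolding NN_def by simp
qed

lemma mm_madj: "mm v (madj A) = mm v A"
  by (cases A) (simp add: vneg max.commute max.left_commute)

lemma mapp_lower: "v (mdet A) * NN v u \<le> mm v A * NN v (mapp A u)"
  using mapp_upper[of "madj A" "mapp A u"] by (simp add: mapp_madj NN_scale mm_madj)

lemma det_mapp: "fst (mapp A u) * snd (mapp A w) - snd (mapp A u) * fst (mapp A w)
   = mdet A * (fst u * snd w - snd u * fst w)"
  by (cases A; cases u; cases w) (simp add: algebra_simps)

lemma chordal_nn: "chordal v u w \<ge> 0"
  unfolding chordal_def using vnn NN_nn unfolding NN_def by simp

lemma chordal_lip: assumes "mdet A \<noteq> 0" "u \<noteq> (0,0)" "w \<noteq> (0,0)"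
  shows "chordal v (mapp A u) (mapp A w) \<le> (mm v A ^ 2 / v (mdet A)) * chordal v u w"
proof -
  define d where "d = v (mdet A)"
  define m where "m = mm v A"
  define D where "D = v (fst u * snd w - snd u * fst w)"
  have d: "d > 0" using vpos assms unfolding d_def by simp
  have Nu: "NN v u > 0" "NN v w > 0" using NN_pos assms by auto
  have Au: "NN v (mapp A u) > 0" "NN v (mapp A w) > 0"
    using NN_pos[OF mapp_nz[OF assms(1) assms(2)]] NN_pos[OF mapp_nz[OF assms(1) assms(3)]] by auto
  have lu: "d * NN v u \<le> m * NN v (mapp A u)" and lw: "d * NN v w \<le> m * NN v (mapp A w)"
    using mapp_lower unfolding d_def m_def by auto
  have "0 < d * NN v u" using d Nu by simp
  then have "0 < m * NN v (mapp A u)" using lu by linarith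
  then have m: "m > 0" using Au by (simp add: zero_less_mult_iff)
  have D: "D \<ge> 0" unfolding D_def by (rule vnn)
  have key: "(d * NN v u) * (d * NN v w) \<le> (m * NN v (mapp A u)) * (m * NN v (mapp A w))"
  proof (rule mult_mono[OF lu lw])
    show "0 \<le> m * NN v (mapp A u)" using lu d Nu by (smt (verit) mult_pos_pos)
    show "0 \<le> d * NN v w" using d Nu by simp
  qed
  have lhs: "chordal v (mapp A u) (mapp A w) = d * D / (NN v (mapp A u) * NN v (mapp A w))"
    unfolding chordal_def d_def D_def NN_def by (simp add: det_mapp vmult)
  have rhs: "(mm v A ^ 2 / v (mdet A)) * chordal v u w = m^2 / d * (D / (NN v u * NN v w))"
    unfolding chordal_def d_def D_def NN_def m_def by simp
  define P where "P = NN v (mapp A u) * NN v (mapp A w)"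
  define Q where "Q = NN v u * NN v w"
  have P: "P > 0" using Au unfolding P_def by simp
  have Q: "Q > 0" using Nu unfolding Q_def by simp
  have k2: "d*d*Q \<le> m*m*P" using key unfolding P_def Q_def by (simp add: mult_ac)
  have k3: "D*(d*d*Q) \<le> D*(m*m*P)" using k2 D by (rule mult_left_mono)
  have e1: "d * D / P = (D*(d*d*Q)) / (d*P*Q)" using d P Q by (simp add: field_simps)
  have e2: "m^2 / d * (D / Q) = (D*(m*m*P)) / (d*P*Q)" using d P Q by (simp add: field_simps power2_eq_square)
  have "d * D / P \<le> m^2 / d * (D / Q)" unfolding e1 e2
    using k3 d P Q by (intro divide_right_mono) auto
  then have "d * D / (NN v (mapp A u) * NN v (mapp A w)) \<le> m^2 / d * (D / (NN v u * NN v w))"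
    unfolding P_def Q_def .
  then show ?thesis using lhs rhs by simp
qed

lemma chordal_scale1: assumes "k \<noteq> 0" shows "chordal v (k * fst u, k * snd u) w = chordal v u w"
proof -
  have num: "(k*fst u) * snd w - (k*snd u) * fst w = k * (fst u * snd w - snd u * fst w)"
    by (simp add: algebra_simps)
  have vk: "v k > 0" using vpos assms by simp
  have "chordal v (k * fst u, k * snd u) w = v ((k*fst u) * snd w - (k*snd u) * fst w) / (NN v (k * fst u, k * snd u) * NN v w)"
    unfolding chordal_def NN_def by simp
  also have "\<dots> = (v k * v (fst u * snd w - snd u * fst w)) / ((v k * NN v u) * NN v w)"
    by (simp only: num NN_scale vmult)
  also have "\<dots> = v (fst u * snd w - snd u * fst w) / (NN v u * NN v w)"
    using vk by (simp only: mult.assoc mult_divide_mult_cancel_left_if) simp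
  also have "\<dots> = chordal v u w" unfolding chordal_def NN_def by simp
  finally show ?thesis .
qed

lemma chordal_scale2: assumes "k \<noteq> 0" shows "chordal v u (k * fst w, k * snd w) = chordal v u w"
proof -
  have num: "fst u * (k * snd w) - snd u * (k * fst w) = k * (fst u * snd w - snd u * fst w)"
    by (simp add: algebra_simps)
  have vk: "v k > 0" using vpos assms by simp
  have "chordal v u (k * fst w, k * snd w) = v (fst u * (k * snd w) - snd u * (k * fst w)) / (NN v u * NN v (k * fst w, k * snd w))"
    unfolding chordal_def NN_def by simp
  also have "\<dots> = (v k * v (fst u * snd w - snd u * fst w)) / (NN v u * (v k * NN v w))"
    by (simp only: num NN_scale vmult)
  also have "\<dots> = (v k * v (fst u * snd w - snd u * fst w)) / (v k * (NN v u * NN v w))"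
    by (simp only: mult_ac)
  also have "\<dots> = v (fst u * snd w - snd u * fst w) / (NN v u * NN v w)"
    using vk by (simp only: mult_divide_mult_cancel_left_if) simp
  also have "\<dots> = chordal v u w" unfolding chordal_def NN_def by simp
  finally show ?thesis .
qed

lemma chordal_pt: assumes "z \<in> P1 UNIV" "z' \<in> P1 UNIV" "a \<in> z" "b \<in> z'"
  shows "chordal v a b = chordal v (pt_rep z) (pt_rep z')"
proof -
  obtain k where k: "k \<noteq> 0" "a = (k * fst (pt_rep z), k * snd (pt_rep z))"
    using assms(3) P1_UNIV_rep(3)[OF assms(1)] pl_mem by metis
  obtain k' where k': "k' \<noteq> 0" "b = (k' * fst (pt_rep z'), k' * snd (pt_rep z'))"
    using assms(4) P1_UNIV_rep(3)[OF assms(2)] pl_mem by metis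
  show ?thesis using k k' chordal_scale1 chordal_scale2 by simp
qed

lemma mob_tendsto: assumes "X \<in> PGL2 UNIV" "\<And>j. Z j \<in> P1 UNIV" "z \<in> P1 UNIV" "p1_tendsto v Z z"
  shows "p1_tendsto v (\<lambda>j. mob X (Z j)) (mob X z)"
proof -
  obtain M where M: "X = pgl_class M" "mdet M \<noteq> 0" using assms(1) by (auto elim: PGL2_E)
  have MX: "M \<in> X" unfolding M pgl_class_def by (rule CollectI, rule exI[of _ 1]) (cases M, simp)
  define C where "C = mm v M ^ 2 / v (mdet M)"
  have mem: "mapp M (pt_rep w) \<in> mob X w" if "w \<in> P1 UNIV" for w
    unfolding mob_def using MX P1_UNIV_rep(1)[OF that] by blast
  have eq: "chordal v (pt_rep (mob X (Z j))) (pt_rep (mob X z)) =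
      chordal v (mapp M (pt_rep (Z j))) (mapp M (pt_rep z))" for j
    using chordal_pt[OF mob_P1[OF assms(1) assms(2)] mob_P1[OF assms(1) assms(3)]
        mem[OF assms(2)] mem[OF assms(3)]] by simp
  have le: "chordal v (pt_rep (mob X (Z j))) (pt_rep (mob X z)) \<le> C * chordal v (pt_rep (Z j)) (pt_rep z)" for j
    unfolding eq C_def
    by (rule chordal_lip[OF M(2) P1_UNIV_rep(2)[OF assms(2)] P1_UNIV_rep(2)[OF assms(3)]])
  have t: "(\<lambda>j. C * chordal v (pt_rep (Z j)) (pt_rep z)) \<longlonglongrightarrow> C * 0"
    using assms(4) unfolding p1_tendsto_def by (intro tendsto_mult tendsto_const)
  show ?thesis unfolding p1_tendsto_def
    by (rule tendsto_sandwich[of "\<lambda>_. 0" _ _ "\<lambda>j. C * chordal v (pt_rep (Z j)) (pt_rep z)"])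
       (use le t chordal_nn in auto)
qed

end


abbreviation UU :: "'i \<Rightarrow> 'c::field set" where "UU \<equiv> (\<lambda>_. UNIV)"

lemma act_S_app: "q \<in> S \<Longrightarrow> act_S S g x q = mob (g q) (x q)"
  unfolding act_S_def by simp

lemma PS_mem: "x \<in> PS S \<Longrightarrow> q \<in> S \<Longrightarrow> x q \<in> P1 UNIV"
  unfolding PS_def by auto

lemma PGL2_S_mem: "g \<in> PGL2_S S F \<Longrightarrow> q \<in> S \<Longrightarrow> g q \<in> PGL2 (F q)"
  unfolding PGL2_S_def by auto

lemma PGL2_S_U: "g \<in> PGL2_S S F \<Longrightarrow> g \<in> PGL2_S S UU"
  unfolding PGL2_S_def using PGL2_mono by (auto simp: PiE_iff)

lemma inv_S_PGL2: "g \<in> PGL2_S S UU \<Longrightarrow> inv_S S g \<in> PGL2_S S UU"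
  unfolding PGL2_S_def inv_S_def using pgl_inv_PGL2 by (auto simp: PiE_iff)

lemma mult_S_PGL2: "g \<in> PGL2_S S UU \<Longrightarrow> h \<in> PGL2_S S UU \<Longrightarrow> mult_S S g h \<in> PGL2_S S UU"
  unfolding PGL2_S_def mult_S_def using pgl_mult_PGL2 by (auto simp: PiE_iff)

lemma act_S_PS: "g \<in> PGL2_S S UU \<Longrightarrow> x \<in> PS S \<Longrightarrow> act_S S g x \<in> PS S"
  unfolding PS_def act_S_def using mob_P1 PGL2_S_mem[of g S UU] by (auto simp: PiE_iff)

lemma act_S_inv: assumes "g \<in> PGL2_S S UU" "x \<in> PS S"
  shows "act_S S (inv_S S g) (act_S S g x) = x"
proof (rule ext)
  fix q show "act_S S (inv_S S g) (act_S S g x) q = x q"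
  proof (cases "q \<in> S")
    case True
    then show ?thesis unfolding act_S_def inv_S_def
      using mob_inv[OF PGL2_S_mem[OF assms(1) True] PS_mem[OF assms(2) True]] by simp
  next
    case False
    have "x \<in> extensional S" using assms(2) unfolding PS_def PiE_def by blast
    then have "x q = undefined" using False by (rule extensional_arb)
    then show ?thesis using False unfolding act_S_def by simp
  qed
qed

lemma act_S_inv2: assumes "g \<in> PGL2_S S UU" "x \<in> PS S"
  shows "act_S S g (act_S S (inv_S S g) x) = x"
proof (rule ext)
  fix q show "act_S S g (act_S S (inv_S S g) x) q = x q"
  proof (cases "q \<in> S")
    case True
    then show ?thesis unfolding act_S_def inv_S_def
      using mob_inv2[OF PGL2_S_mem[OF assms(1) True] PS_mem[OF assms(2) True]] by simp
  next
    case False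
    have "x \<in> extensional S" using assms(2) unfolding PS_def PiE_def by blast
    then have "x q = undefined" using False by (rule extensional_arb)
    then show ?thesis using False unfolding act_S_def by simp
  qed
qed

lemma act_S_conj: assumes "g \<in> PGL2_S S UU" "h \<in> PGL2_S S UU" "y \<in> PS S"
  shows "act_S S (mult_S S (mult_S S g h) (inv_S S g)) (act_S S g y) = act_S S g (act_S S h y)"
proof (rule ext)
  fix q show "act_S S (mult_S S (mult_S S g h) (inv_S S g)) (act_S S g y) q = act_S S g (act_S S h y) q"
  proof (cases "q \<in> S")
    case True
    have g: "g q \<in> PGL2 UNIV" and h: "h q \<in> PGL2 UNIV" and y: "y q \<in> P1 UNIV"
      using PGL2_S_mem[OF assms(1) True] PGL2_S_mem[OF assms(2) True] PS_mem[OF assms(3) True] by auto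
    have "mob (pgl_mult (pgl_mult (g q) (h q)) (pgl_inv (g q))) (mob (g q) (y q))
        = mob (pgl_mult (g q) (h q)) (mob (pgl_inv (g q)) (mob (g q) (y q)))"
      by (rule mob_mult[OF pgl_mult_PGL2[OF g h] pgl_inv_PGL2[OF g] mob_P1[OF g y]])
    also have "\<dots> = mob (pgl_mult (g q) (h q)) (y q)" using mob_inv[OF g y] by simp
    also have "\<dots> = mob (g q) (mob (h q) (y q))" by (rule mob_mult[OF g h y])
    finally show ?thesis using True unfolding act_S_def mult_S_def inv_S_def by simp
  next
    case False
    then show ?thesis unfolding act_S_def by simp
  qed
qed

lemma conj_cancel_elem: assumes "g \<in> PGL2_S S UU" "h \<in> PGL2_S S UU"
  shows "mult_S S (mult_S S (inv_S S g) (mult_S S (mult_S S g h) (inv_S S g))) (inv_S S (inv_S S g)) = h"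
proof (rule ext)
  fix q show "mult_S S (mult_S S (inv_S S g) (mult_S S (mult_S S g h) (inv_S S g))) (inv_S S (inv_S S g)) q = h q"
  proof (cases "q \<in> S")
    case True
    then show ?thesis unfolding mult_S_def inv_S_def
      using cancel[OF PGL2_S_mem[OF assms(1) True] PGL2_S_mem[OF assms(2) True]] by simp
  next
    case False
    have "h \<in> extensional S" using assms(2) unfolding PGL2_S_def PiE_def by blast
    then have "h q = undefined" using False by (rule extensional_arb)
    then show ?thesis using False unfolding mult_S_def by simp
  qed
qed

lemma conj_S_PGL2: "\<Gamma> \<subseteq> PGL2_S S UU \<Longrightarrow> g \<in> PGL2_S S UU \<Longrightarrow> conj_S S g \<Gamma> \<subseteq> PGL2_S S UU"
proof -
  assume G: "\<Gamma> \<subseteq> PGL2_S S UU" and g: "g \<in> PGL2_S S UU"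
  show ?thesis unfolding conj_S_def
  proof (rule image_subsetI)
    fix h assume "h \<in> \<Gamma>"
    then have h: "h \<in> PGL2_S S UU" using G by (rule subsetD[rotated])
    show "mult_S S (mult_S S g h) (inv_S S g) \<in> PGL2_S S UU"
      by (rule mult_S_PGL2[OF mult_S_PGL2[OF g h] inv_S_PGL2[OF g]])
  qed
qed

lemma conj_S_cancel: assumes "\<Gamma> \<subseteq> PGL2_S S UU" "g \<in> PGL2_S S UU"
  shows "conj_S S (inv_S S g) (conj_S S g \<Gamma>) = \<Gamma>"
proof -
  have "conj_S S (inv_S S g) (conj_S S g \<Gamma>) = (\<lambda>h. mult_S S (mult_S S (inv_S S g) (mult_S S (mult_S S g h) (inv_S S g))) (inv_S S (inv_S S g))) ` \<Gamma>"
    unfolding conj_S_def image_image by simp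
  also have "\<dots> = (\<lambda>h. h) ` \<Gamma>"
  proof (rule image_cong[OF refl])
    fix h assume "h \<in> \<Gamma>"
    show "mult_S S (mult_S S (inv_S S g) (mult_S S (mult_S S g h) (inv_S S g))) (inv_S S (inv_S S g)) = h"
      using conj_cancel_elem[OF assms(2) subsetD[OF assms(1) \<open>h \<in> \<Gamma>\<close>]] .
  qed
  finally show ?thesis by simp
qed

lemma conj_inj: assumes "\<Gamma> \<subseteq> PGL2_S S UU" "g \<in> PGL2_S S UU"
  shows "inj_on (\<lambda>h. mult_S S (mult_S S g h) (inv_S S g)) \<Gamma>"
proof (rule inj_onI)
  fix h h' assume h: "h \<in> \<Gamma>" "h' \<in> \<Gamma>" and eq: "mult_S S (mult_S S g h) (inv_S S g) = mult_S S (mult_S S g h') (inv_S S g)"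
  have "h = mult_S S (mult_S S (inv_S S g) (mult_S S (mult_S S g h) (inv_S S g))) (inv_S S (inv_S S g))"
    using conj_cancel_elem[OF assms(2), of h] h assms(1) by auto
  also have "\<dots> = h'" unfolding eq using conj_cancel_elem[OF assms(2), of h'] h assms(1) by auto
  finally show "h = h'" .
qed

lemma limit_conj_sub: assumes na: "nonarch_abs v" and G: "\<Gamma> \<subseteq> PGL2_S S UU" and g: "g \<in> PGL2_S S UU"
  shows "act_S S g ` limit_set v S \<Gamma> \<subseteq> limit_set v S (conj_S S g \<Gamma>)"
proof
  fix x' assume "x' \<in> act_S S g ` limit_set v S \<Gamma>"
  then obtain x where x: "x \<in> limit_set v S \<Gamma>" "x' = act_S S g x" by blast
  have xPS: "x \<in> PS S" using x(1) unfolding limit_set_def by simp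
  obtain y \<gamma> where y: "y \<in> PS S" and \<gamma>: "\<forall>j. \<gamma> j \<in> \<Gamma>" "inj \<gamma>"
    and t: "\<forall>q\<in>S. p1_tendsto v (\<lambda>j. act_S S (\<gamma> j) y q) (x q)"
    using x(1) unfolding limit_set_def mem_Collect_eq by metis
  define c where "c = (\<lambda>h. mult_S S (mult_S S g h) (inv_S S g))"
  define \<gamma>' where "\<gamma>' = c \<circ> \<gamma>"
  have \<gamma>'1: "\<forall>j. \<gamma>' j \<in> conj_S S g \<Gamma>" unfolding \<gamma>'_def c_def conj_S_def comp_def
    using \<gamma>(1) by blast
  have ic: "inj_on c (range \<gamma>)" unfolding c_def
    by (rule inj_on_subset[OF conj_inj[OF G g]]) (use \<gamma>(1) in blast)
  have \<gamma>'2: "inj \<gamma>'" unfolding \<gamma>'_def by (rule comp_inj_on[OF \<gamma>(2) ic])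
  have \<gamma>S: "\<gamma> j \<in> PGL2_S S UU" for j using \<gamma>(1) G by blast
  have t': "\<forall>q\<in>S. p1_tendsto v (\<lambda>j. act_S S (\<gamma>' j) (act_S S g y) q) (x' q)"
  proof
    fix q assume q: "q \<in> S"
    have e0: "act_S S (\<gamma>' j) (act_S S g y) = act_S S g (act_S S (\<gamma> j) y)" for j
      unfolding \<gamma>'_def c_def comp_def by (rule act_S_conj[OF g \<gamma>S y])
    have e: "act_S S (\<gamma>' j) (act_S S g y) q = mob (g q) (act_S S (\<gamma> j) y q)" for j
      unfolding e0 by (rule act_S_app[OF q])
    have Z: "act_S S (\<gamma> j) y q \<in> P1 UNIV" for j by (rule PS_mem[OF act_S_PS[OF \<gamma>S y] q])
    have tq: "p1_tendsto v (\<lambda>j. act_S S (\<gamma> j) y q) (x q)" using t q by blast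
    have xq: "x' q = mob (g q) (x q)" unfolding x(2) by (rule act_S_app[OF q])
    show "p1_tendsto v (\<lambda>j. act_S S (\<gamma>' j) (act_S S g y) q) (x' q)" unfolding e xq
      by (rule mob_tendsto[OF na PGL2_S_mem[OF g q] Z PS_mem[OF xPS q] tq])
  qed
  have x'PS: "x' \<in> PS S" unfolding x(2) by (rule act_S_PS[OF g xPS])
  have yPS: "act_S S g y \<in> PS S" by (rule act_S_PS[OF g y])
  show "x' \<in> limit_set v S (conj_S S g \<Gamma>)" unfolding limit_set_def mem_Collect_eq
    using x'PS yPS \<gamma>'1 \<gamma>'2 t' by blast
qed

lemma limit_conj: assumes na: "nonarch_abs v" and G: "\<Gamma> \<subseteq> PGL2_S S UU" and g: "g \<in> PGL2_S S UU"
  shows "limit_set v S (conj_S S g \<Gamma>) = act_S S g ` limit_set v S \<Gamma>"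
proof
  show "act_S S g ` limit_set v S \<Gamma> \<subseteq> limit_set v S (conj_S S g \<Gamma>)" by (rule limit_conj_sub[OF assms])
  show "limit_set v S (conj_S S g \<Gamma>) \<subseteq> act_S S g ` limit_set v S \<Gamma>"
  proof
    fix x assume x: "x \<in> limit_set v S (conj_S S g \<Gamma>)"
    have xPS: "x \<in> PS S" using x unfolding limit_set_def by blast
    have "act_S S (inv_S S g) x \<in> limit_set v S (conj_S S (inv_S S g) (conj_S S g \<Gamma>))"
      using limit_conj_sub[OF na conj_S_PGL2[OF G g] inv_S_PGL2[OF g]] x by blast
    then have "act_S S (inv_S S g) x \<in> limit_set v S \<Gamma>" using conj_S_cancel[OF G g] by simp
    moreover have "x = act_S S g (act_S S (inv_S S g) x)" using act_S_inv2[OF g xPS] by simp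
    ultimately show "x \<in> act_S S g ` limit_set v S \<Gamma>" by blast
  qed
qed


lemma exists_nonK: assumes amb: "ambient_C p v" and K: "local_subfield v K"
  shows "\<exists>c::'c::field. c \<notin> K"
proof -
  have na: "nonarch_abs v" using amb unfolding ambient_C_def by simp
  have ac: "alg_closed_field TYPE('c)" using amb unfolding ambient_C_def by simp
  obtain \<pi> where pi: "\<pi> \<in> K" "0 < v \<pi>" "v \<pi> < 1"
    and disc: "\<forall>x\<in>K. x \<noteq> 0 \<longrightarrow> (\<exists>n::int. v x = v \<pi> powi n)"
    using K unfolding local_subfield_def by blast
  define P where "P = [:- \<pi>, 0, 1:]"
  have "degree P = 2" unfolding P_def by simp
  then obtain c where "poly P c = 0" using ac unfolding alg_closed_field_def by fastforce
  then have cc: "c * c = \<pi>" unfolding P_def by (simp add: algebra_simps)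
  show ?thesis
  proof (rule exI[of _ c], rule notI)
    assume cK: "c \<in> K"
    have "c \<noteq> 0" using cc pi(2) v0[OF na] by auto
    then obtain n :: int where n: "v c = v \<pi> powi n" using disc cK by blast
    have "v \<pi> = v c * v c" using cc vmult[OF na] by metis
    also have "\<dots> = v \<pi> powi (n + n)" unfolding n by (rule power_int_add[symmetric]) (use pi(2) in auto)
    finally have eq: "v \<pi> powi 1 = v \<pi> powi (n + n)" by simp
    have "n + n \<noteq> 1" by presburger
    then have "n + n < 1 \<or> 1 < n + n" by linarith
    then show False
    proof
      assume "n + n < 1"
      then have "v \<pi> powi 1 < v \<pi> powi (n + n)" using pi by (intro power_int_strict_decreasing) auto
      then show False using eq by simp
    next
      assume "1 < n + n"
      then have "v \<pi> powi (n + n) < v \<pi> powi 1" using pi by (intro power_int_strict_decreasing) auto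
      then show False using eq by simp
    qed
  qed
qed

lemma not_in_P1K: assumes "c \<notin> K" and K: "local_subfield v K"
  shows "proj_line (c, 1) \<notin> P1 K"
proof
  assume "proj_line (c, 1) \<in> P1 K"
  then obtain x y where xy: "proj_line (c, 1) = proj_line (x, y)" "x \<in> K" "y \<in> K" "(x,y) \<noteq> (0,0)"
    unfolding P1_def by blast
  have "(c, 1) \<in> proj_line (x, y)" using xy(1) pl_self[of "(c,1)"] by simp
  then obtain k where k: "k \<noteq> 0" "c = k * x" "1 = k * y" unfolding pl_mem by auto
  have y0: "y \<noteq> 0" using k by auto
  have "k = inverse y" using k(3) y0 by (simp add: field_simps)
  then have "k \<in> K" using K xy(3) y0 unfolding local_subfield_def by auto
  then have "c \<in> K" using K xy(2) k(2) unfolding local_subfield_def by auto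
  then show False using assms(1) by simp
qed

lemma P1_sub: "P1 K \<subseteq> P1 UNIV" unfolding P1_def by auto

lemma plectic_unique_sub:
  assumes W: "\<forall>q\<in>S. \<exists>w. w \<in> P1 UNIV \<and> w \<notin> P1 (F q)"
    and L: "plectic_family v S F \<Gamma> L" and L': "plectic_family v S F \<Gamma> L'"
    and q: "q \<in> S"
  shows "L q \<subseteq> L' q"
proof
  fix z assume z: "z \<in> L q"
  define W where "W = (\<lambda>r. SOME w. w \<in> P1 UNIV \<and> w \<notin> P1 (F r))"
  have Wr: "W r \<in> P1 UNIV \<and> W r \<notin> P1 (F r)" if "r \<in> S" for r
    unfolding W_def by (rule someI_ex) (use W that in blast)
  define x where "x = restrict (\<lambda>r. if r = q then z else W r) S"
  have zP: "z \<in> P1 UNIV" using z L q P1_sub unfolding plectic_family_def by blast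
  have xPS: "x \<in> PS S" unfolding x_def PS_def using zP Wr by (auto simp: PiE_iff)
  have "x \<in> (\<Union>q\<in>S. {x \<in> PS S. x q \<in> L q})" using xPS z q unfolding x_def by auto
  then have "x \<in> limit_set v S \<Gamma>" using L unfolding plectic_family_def by simp
  then have "x \<in> (\<Union>q\<in>S. {x \<in> PS S. x q \<in> L' q})" using L' unfolding plectic_family_def by simp
  then obtain r where r: "r \<in> S" "x r \<in> L' r" by blast
  show "z \<in> L' q"
  proof (cases "r = q")
    case True then show ?thesis using r unfolding x_def by simp
  next
    case False
    then have "x r = W r" unfolding x_def using r by simp
    moreover have "L' r \<subseteq> P1 (F r)" using L' r unfolding plectic_family_def by blast
    ultimately have "W r \<in> P1 (F r)" using r by auto
    then show ?thesis using Wr[OF r(1)] by blast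
  qed
qed

lemma plectic_unique:
  assumes W: "\<forall>q\<in>S. \<exists>w. w \<in> P1 UNIV \<and> w \<notin> P1 (F q)"
    and L: "plectic_family v S F \<Gamma> L" and L': "plectic_family v S F \<Gamma> L'"
  shows "L' = L"
proof
  fix q show "L' q = L q"
  proof (cases "q \<in> S")
    case True
    then show ?thesis using plectic_unique_sub[OF W L L' True] plectic_unique_sub[OF W L' L True] by blast
  next
    case False
    then show ?thesis using L L' unfolding plectic_family_def by simp
  qed
qed


theorem lemma2p11:
  fixes p :: nat and v :: "'c::field \<Rightarrow> real"
    and S :: "'i set" and F :: "'i \<Rightarrow> 'c set"
    and \<Gamma> :: "('i \<Rightarrow> 'c pgl) set" and g :: "'i \<Rightarrow> 'c pgl"
  assumes "ambient_C p v"
    and "emb_local_etale v S F"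
    and "subgroup_S S F \<Gamma>"
    and "plectic v S F \<Gamma>"
    and "g \<in> PGL2_S S F"
  shows "plectic v S F (conj_S S g \<Gamma>) \<and>
         dist_limit_points v S F (conj_S S g \<Gamma>) = act_S S g ` dist_limit_points v S F \<Gamma>"
proof -
  have na: "nonarch_abs v" using assms(1) unfolding ambient_C_def by simp
  have LF: "\<And>q. q \<in> S \<Longrightarrow> local_subfield v (F q)" using assms(2) unfolding emb_local_etale_def by simp
  have cl: "\<And>q. q \<in> S \<Longrightarrow> \<forall>x\<in>F q. \<forall>y\<in>F q. x + y \<in> F q \<and> x * y \<in> F q"
    using LF unfolding local_subfield_def by blast
  have W: "\<forall>q\<in>S. \<exists>w. w \<in> P1 UNIV \<and> w \<notin> P1 (F q)"
  proof
    fix q assume q: "q \<in> S"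
    obtain c where c: "c \<notin> F q" using exists_nonK[OF assms(1) LF[OF q]] by blast
    show "\<exists>w. w \<in> P1 UNIV \<and> w \<notin> P1 (F q)"
      by (rule exI[of _ "proj_line (c,1)"]) (use P1_UNIV_I[of "(c,1)"] not_in_P1K[OF c LF[OF q]] in simp)
  qed
  have G: "\<Gamma> \<subseteq> PGL2_S S UU" using assms(3) PGL2_S_U unfolding subgroup_S_def by blast
  have gU: "g \<in> PGL2_S S UU" using assms(5) by (rule PGL2_S_U)
  obtain L where L: "plectic_family v S F \<Gamma> L" using assms(4) unfolding plectic_def by blast
  have LP: "\<And>q. q \<in> S \<Longrightarrow> L q \<subseteq> P1 (F q)" using L unfolding plectic_family_def by blast
  have LU: "\<And>q. q \<in> S \<Longrightarrow> L q \<subseteq> P1 UNIV" using LP P1_sub by blast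
  define L' where "L' = (\<lambda>q. if q \<in> S then mob (g q) ` L q else {})"
  have gq: "\<And>q. q \<in> S \<Longrightarrow> g q \<in> PGL2 UNIV" using PGL2_S_mem[OF gU] by simp
  have limL: "limit_set v S \<Gamma> = (\<Union>q\<in>S. {x \<in> PS S. x q \<in> L q})" using L unfolding plectic_family_def by simp
  have PF: "plectic_family v S F (conj_S S g \<Gamma>) L'"
    unfolding plectic_family_def
  proof (intro conjI)
    show "\<forall>q\<in>S. L' q \<subseteq> P1 (F q)"
    proof (intro ballI subsetI)
      fix q w assume q: "q \<in> S" and w: "w \<in> L' q"
      then obtain l where l: "l \<in> L q" "w = mob (g q) l" unfolding L'_def by auto
      show "w \<in> P1 (F q)" unfolding l(2)
        by (rule mob_P1K[OF PGL2_S_mem[OF assms(5) q] subsetD[OF LP[OF q] l(1)] cl[OF q]])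
    qed
    show "\<forall>q. q \<notin> S \<longrightarrow> L' q = {}" unfolding L'_def by simp
    show "limit_set v S (conj_S S g \<Gamma>) = (\<Union>q\<in>S. {x \<in> PS S. x q \<in> L' q})"
      unfolding limit_conj[OF na G gU] limL
    proof
      show "act_S S g ` (\<Union>q\<in>S. {x \<in> PS S. x q \<in> L q}) \<subseteq> (\<Union>q\<in>S. {x \<in> PS S. x q \<in> L' q})"
      proof
        fix x assume "x \<in> act_S S g ` (\<Union>q\<in>S. {x \<in> PS S. x q \<in> L q})"
        then obtain x0 q where x0: "q \<in> S" "x0 \<in> PS S" "x0 q \<in> L q" "x = act_S S g x0" by blast
        have "x \<in> PS S" using x0 act_S_PS[OF gU] by blast
        moreover have "x q \<in> L' q" using x0 unfolding L'_def by (simp add: act_S_app)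
        ultimately show "x \<in> (\<Union>q\<in>S. {x \<in> PS S. x q \<in> L' q})" using x0(1) by blast
      qed
      show "(\<Union>q\<in>S. {x \<in> PS S. x q \<in> L' q}) \<subseteq> act_S S g ` (\<Union>q\<in>S. {x \<in> PS S. x q \<in> L q})"
      proof
        fix x assume "x \<in> (\<Union>q\<in>S. {x \<in> PS S. x q \<in> L' q})"
        then obtain q where q: "q \<in> S" "x \<in> PS S" "x q \<in> L' q" by blast
        then obtain l where l: "l \<in> L q" "x q = mob (g q) l" unfolding L'_def by auto
        define x0 where "x0 = act_S S (inv_S S g) x"
        have x0PS: "x0 \<in> PS S" unfolding x0_def by (rule act_S_PS[OF inv_S_PGL2[OF gU] q(2)])
        have "x0 q = mob (pgl_inv (g q)) (mob (g q) l)" unfolding x0_def using q(1) l(2)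
          by (simp add: act_S_app inv_S_def)
        also have "\<dots> = l" by (rule mob_inv[OF gq[OF q(1)] subsetD[OF LU[OF q(1)] l(1)]])
        finally have "x0 \<in> (\<Union>q\<in>S. {x \<in> PS S. x q \<in> L q})" using x0PS q(1) l(1) by blast
        moreover have "x = act_S S g x0" unfolding x0_def using act_S_inv2[OF gU q(2)] by simp
        ultimately show "x \<in> act_S S g ` (\<Union>q\<in>S. {x \<in> PS S. x q \<in> L q})" by blast
      qed
    qed
  qed
  have T1: "(THE L. plectic_family v S F \<Gamma> L) = L"
    by (rule the_equality[where P="\<lambda>L. plectic_family v S F \<Gamma> L", OF L]) (rule plectic_unique[OF W L])
  have T2: "(THE L. plectic_family v S F (conj_S S g \<Gamma>) L) = L'"
    by (rule the_equality[where P="\<lambda>L. plectic_family v S F (conj_S S g \<Gamma>) L", OF PF]) (rule plectic_unique[OF W PF])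
  have "PiE S L' = act_S S g ` PiE S L"
  proof
    show "act_S S g ` PiE S L \<subseteq> PiE S L'"
    proof
      fix x assume "x \<in> act_S S g ` PiE S L"
      then obtain x0 where x0: "x0 \<in> PiE S L" "x = act_S S g x0" by blast
      show "x \<in> PiE S L'" unfolding x0(2) act_S_def L'_def using x0(1) by (auto simp: PiE_iff)
    qed
    show "PiE S L' \<subseteq> act_S S g ` PiE S L"
    proof
      fix x assume x: "x \<in> PiE S L'"
      have xq: "\<And>q. q \<in> S \<Longrightarrow> x q \<in> mob (g q) ` L q" using x unfolding L'_def by (auto simp: PiE_iff)
      have xPS: "x \<in> PS S" unfolding PS_def
      proof -
        have "\<And>q. q \<in> S \<Longrightarrow> x q \<in> P1 UNIV"
        proof -
          fix q assume q: "q \<in> S"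
          then obtain l where "l \<in> L q" "x q = mob (g q) l" using xq by blast
          then show "x q \<in> P1 UNIV" using mob_P1[OF gq[OF q]] LU[OF q] by auto
        qed
        then show "x \<in> PiE S (\<lambda>_. P1 UNIV)" using x by (auto simp: PiE_iff)
      qed
      define x0 where "x0 = act_S S (inv_S S g) x"
      have "x0 \<in> PiE S L"
      proof -
        have "\<And>q. q \<in> S \<Longrightarrow> x0 q \<in> L q"
        proof -
          fix q assume q: "q \<in> S"
          then obtain l where l: "l \<in> L q" "x q = mob (g q) l" using xq by blast
          have "x0 q = mob (pgl_inv (g q)) (mob (g q) l)" unfolding x0_def using q l(2)
            by (simp add: act_S_app inv_S_def)
          also have "\<dots> = l" by (rule mob_inv[OF gq[OF q] subsetD[OF LU[OF q] l(1)]])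
          finally show "x0 q \<in> L q" using l(1) by simp
        qed
        then show ?thesis unfolding x0_def act_S_def by (auto simp: PiE_iff)
      qed
      moreover have "x = act_S S g x0" unfolding x0_def using act_S_inv2[OF gU xPS] by simp
      ultimately show "x \<in> act_S S g ` PiE S L" by blast
    qed
  qed
  then show ?thesis using PF T1 T2 unfolding plectic_def dist_limit_points_def by auto
qed

end
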